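(* In the $\{0,1\}$-speed setting, let $\mathcal B=\{B_1,\dots,B_m\}$ be a partition of $n$ jobs with processing times $\mathbf p$ into $m$ bags, and let $\mathcal B^*=\{B^*_1,\dots,B^*_m\}$ be an optimal partition of the jobs when all $m$ machines are available (i.e. a partition into $m$ bags with $\max_{B'\in\mathcal B^*}p(B')=opt(\mathbf p,m)$). If $\frac{\max_{B\in\mathcal B}p(B)}{\max_{B'\in\mathcal B^*}p(B')}\le\theta$, then $\mathcal B$ is a $\max\{\theta,2\}$-robust partition.
   Context: $\{0,1\}$-speed setting: there are $n$ jobs with processing times $p_1,\dots,p_n\ge0$ and $m$ machines, each of speed $0$ (unavailable) or $1$ (available); for a bag $B$, $p(B)=\sum_{j\in B}p_j$. $opt(\mathbf p,x)$ denotes the minimum makespan (maximum machine load) of scheduling the individual jobs on $x$ identical unit-speed machines. A partition of the jobs into $m$ bags is $\gamma$-robust if for every number $m_0\in\{1,\dots,m\}$ of available machines, the bags can be assigned (each as a whole) to $m_0$ identical unit-speed machines with makespan at most $\gamma\cdot opt(\mathbf p,m_0)$. *)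

theory Defs
  imports Complex_Main
begin

text \<open>Jobs are 0..<n with processing times p j. An assignment of jobs to x
  machines (or bags) is a function f with f j < x for all jobs j < n.\<close>

definition load :: "(nat \<Rightarrow> real) \<Rightarrow> nat \<Rightarrow> (nat \<Rightarrow> nat) \<Rightarrow> nat \<Rightarrow> real" where
  "load p n f i = (\<Sum>j\<in>{j. j < n \<and> f j = i}. p j)"

definition makespan :: "(nat \<Rightarrow> real) \<Rightarrow> nat \<Rightarrow> nat \<Rightarrow> (nat \<Rightarrow> nat) \<Rightarrow> real" where
  "makespan p n x f = Max {load p n f i | i. i < x}"

definition assignment :: "nat \<Rightarrow> nat \<Rightarrow> (nat \<Rightarrow> nat) \<Rightarrow> bool" where
  "assignment n x f \<longleftrightarrow> (\<forall>j<n. f j < x)"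

definition opt :: "(nat \<Rightarrow> real) \<Rightarrow> nat \<Rightarrow> nat \<Rightarrow> real" where
  "opt p n x = Min {makespan p n x f | f. assignment n x f}"

text \<open>A partition of the jobs into m bags (job j goes to bag B j < m) is gamma-robust if
  for every m0 in 1..m the bags can be assigned as a whole to m0 machines with
  makespan at most gamma * opt(p, m0).\<close>
definition robust :: "(nat \<Rightarrow> real) \<Rightarrow> nat \<Rightarrow> nat \<Rightarrow> (nat \<Rightarrow> nat) \<Rightarrow> real \<Rightarrow> bool" where
  "robust p n m B \<gamma> \<longleftrightarrow>
     (\<forall>m0\<in>{1..m}. \<exists>g. assignment m m0 g \<and>
        (\<forall>i<m0. (\<Sum>k\<in>{k. k < m \<and> g k = i}. load p n B k) \<le> \<gamma> * opt p n m0))"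

end

theory Submission
  imports Defs "HOL-Library.FuncSet"
begin

definition BL :: "(nat \<Rightarrow> real) \<Rightarrow> nat \<Rightarrow> (nat \<Rightarrow> nat) \<Rightarrow> nat \<Rightarrow> real" where
  "BL s m g i = (\<Sum>k\<in>{k. k<m \<and> g k = i}. s k)"

lemma BL_upd_old:
  assumes "a<m" "g a = i" "i' \<noteq> i"
  shows "BL s m (g(a:=i')) i = BL s m g i - s a"
proof -
  have "{k. k<m \<and> (g(a:=i')) k = i} = {k. k<m \<and> g k = i} - {a}" using assms by auto
  moreover have "a \<in> {k. k<m \<and> g k = i}" using assms by auto
  moreover have "finite {k. k<m \<and> g k = i}" by auto
  ultimately show ?thesis unfolding BL_def by (simp add: sum_diff1)
qed

lemma BL_upd_new:
  assumes "a<m" "g a = i" "i' \<noteq> i"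
  shows "BL s m (g(a:=i')) i' = BL s m g i' + s a"
proof -
  have "{k. k<m \<and> (g(a:=i')) k = i'} = insert a {k. k<m \<and> g k = i'}" using assms by auto
  moreover have "a \<notin> {k. k<m \<and> g k = i'}" using assms by auto
  moreover have "finite {k. k<m \<and> g k = i'}" by auto
  ultimately show ?thesis unfolding BL_def by simp
qed

lemma BL_upd_other:
  assumes "j \<noteq> i" "j \<noteq> i'" "g a = i"
  shows "BL s m (g(a:=i')) j = BL s m g j"
proof -
  have "{k. k<m \<and> (g(a:=i')) k = j} = {k. k<m \<and> g k = j}" using assms by auto
  thus ?thesis unfolding BL_def by simp
qed

lemma BL_sum:
  assumes "\<forall>k<m. g k < m0"
  shows "(\<Sum>i<m0. BL s m g i) = (\<Sum>k<m. s k)"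
proof -
  have "(\<Sum>i\<in>{..<m0}. sum s {k \<in> {..<m}. g k = i}) = sum s {..<m}"
    by (rule sum.group) (use assms in auto)
  moreover have "\<And>i. {k \<in> {..<m}. g k = i} = {k. k<m \<and> g k = i}" by auto
  ultimately show ?thesis unfolding BL_def by simp
qed

lemma bag_sched:
  fixes s :: "nat \<Rightarrow> real"
  assumes nn: "\<forall>k<m. s k \<ge> 0" and S: "\<forall>k<m. s k \<le> S" and m0: "m0 \<ge> 1"
  shows "\<exists>g. (\<forall>k<m. g k < m0) \<and> (\<forall>i<m0. BL s m g i \<le> max S (2 * (\<Sum>k<m. s k) / m0))"
proof -
  define A where "A = {..<m} \<rightarrow>\<^sub>E {..<m0}"
  define \<Phi> where "\<Phi> g = (\<Sum>i<m0. (BL s m g i)^2)" for g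
  have finA: "finite A" unfolding A_def by (simp add: finite_PiE)
  have "restrict (\<lambda>_. 0) {..<m} \<in> A" using m0 unfolding A_def by auto
  hence neA: "A \<noteq> {}" by auto
  obtain g where gA: "g \<in> A" and gmin: "\<forall>h\<in>A. \<Phi> g \<le> \<Phi> h"
  proof -
    have "Min (\<Phi> ` A) \<in> \<Phi> ` A" using finA neA by simp
    then obtain g where "g \<in> A" "\<Phi> g = Min (\<Phi> ` A)" by auto
    moreover have "\<forall>h\<in>A. Min (\<Phi> ` A) \<le> \<Phi> h" using finA by simp
    ultimately show ?thesis using that by metis
  qed
  have gr: "\<forall>k<m. g k < m0" using gA unfolding A_def by auto
  define P where "P = (\<Sum>k<m. s k)"
  have Psum: "(\<Sum>i<m0. BL s m g i) = P" using BL_sum gr P_def by simp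
  have Pnn: "P \<ge> 0" using nn unfolding P_def by (auto intro: sum_nonneg)
  have BLnn: "\<And>h j. BL s m h j \<ge> 0" using nn unfolding BL_def by (auto intro: sum_nonneg)
  have "BL s m g i \<le> max S (2*P/m0)" if i: "i<m0" for i
  proof (rule ccontr)
    assume c: "\<not> ?thesis"
    define K where "K = {k. k<m \<and> g k = i \<and> s k > 0}"
    have finK: "finite K" unfolding K_def by auto
    have LK: "BL s m g i = sum s K" unfolding BL_def K_def using nn
      by (intro sum.mono_neutral_right) auto
    have c2: "card K \<ge> 2"
    proof (rule ccontr)
      assume "\<not> card K \<ge> 2"
      then have "card K = 0 \<or> card K = 1" by auto
      then show False
      proof
        assume "card K = 0" then have "K = {}" using finK by simp
        then have "BL s m g i = 0" using LK by simp
        moreover have "2*P/m0 \<ge> 0" using Pnn by simp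
        ultimately show False using c by auto
      next
        assume "card K = 1" then obtain a where a: "K = {a}" by (auto simp: card_Suc_eq)
        then have "a<m" using K_def by auto
        then show False using a LK c S by auto
      qed
    qed
    then obtain a where a: "a \<in> K" by fastforce
    have "card (K - {a}) \<ge> 1" using c2 a finK by simp
    then have "K - {a} \<noteq> {}" by (metis card.empty not_one_le_zero)
    then obtain b where b: "b \<in> K - {a}" by blast
    have "s a + s b = sum s {a,b}" using b by simp
    also have "\<dots> \<le> sum s K" using a b finK K_def by (intro sum_mono2) auto
    finally have "s a + s b \<le> BL s m g i" using LK by simp
    then obtain c where cK: "c \<in> K" and sc: "s c \<le> BL s m g i / 2"
      using a b by (cases "s a \<le> s b") auto
    have cm: "c < m" and gc: "g c = i" and scp: "s c > 0" using cK K_def by auto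
    have key: "BL s m g i \<le> BL s m g j + s c" if j: "j<m0" "j\<noteq>i" for j
    proof -
      define h where "h = g(c:=j)"
      have "h \<in> A" using gA cm j unfolding A_def h_def by (auto simp: PiE_def extensional_def Pi_def)
      hence le: "\<Phi> g \<le> \<Phi> h" using gmin by blast
      have "\<Phi> h - \<Phi> g = (\<Sum>x<m0. (BL s m h x)^2 - (BL s m g x)^2)"
        by (simp add: \<Phi>_def sum_subtractf)
      also have "\<dots> = (\<Sum>x\<in>{i,j}. (BL s m h x)^2 - (BL s m g x)^2)"
        using i j gc unfolding h_def by (intro sum.mono_neutral_right) (auto simp: BL_upd_other[where g=g and a=c and i=i])
      also have "\<dots> = ((BL s m g i - s c)^2 - (BL s m g i)^2) + ((BL s m g j + s c)^2 - (BL s m g j)^2)"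
        using j cm gc unfolding h_def by (simp add: BL_upd_old BL_upd_new)
      also have "\<dots> = 2 * s c * (BL s m g j - BL s m g i + s c)"
        by (simp add: power2_eq_square algebra_simps)
      finally have "0 \<le> 2 * s c * (BL s m g j - BL s m g i + s c)" using le by linarith
      then have "0 \<le> BL s m g j - BL s m g i + s c" using scp by (simp add: zero_le_mult_iff)
      thus ?thesis by linarith
    qed
    have half: "BL s m g i / 2 \<le> BL s m g j" if "j<m0" for j
    proof (cases "j = i")
      case True thus ?thesis using BLnn[of g i] by simp
    next
      case False thus ?thesis using key[OF that False] sc by linarith
    qed
    have "(\<Sum>j<m0. BL s m g i / 2) \<le> (\<Sum>j<m0. BL s m g j)" using half by (intro sum_mono) auto
    then have "real m0 * (BL s m g i / 2) \<le> P" using Psum by simp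
    then have "BL s m g i \<le> 2*P/m0" using m0 by (simp add: field_simps)
    thus False using c by auto
  qed
  thus ?thesis using gr P_def by blast
qed

lemma ms_set: "{load p n f i | i. i<x} = (load p n f) ` {..<x}" by auto

lemma makespan_ge: "i<x \<Longrightarrow> load p n f i \<le> makespan p n x f"
  unfolding makespan_def ms_set by (intro Max_ge) auto

lemma makespan_in: "x\<ge>1 \<Longrightarrow> \<exists>i<x. makespan p n x f = load p n f i"
proof -
  assume "x \<ge> 1"
  then have "0 \<in> {..<x}" by simp
  then have "(load p n f) ` {..<x} \<noteq> {}" by blast
  then have "Max ((load p n f) ` {..<x}) \<in> (load p n f) ` {..<x}" by (intro Max_in) auto
  thus ?thesis unfolding makespan_def ms_set by auto
qed

lemma opt_set:
  assumes "x \<ge> 1"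
  shows "finite {makespan p n x f | f. assignment n x f} \<and> {makespan p n x f | f. assignment n x f} \<noteq> {}"
proof
  have "{makespan p n x f | f. assignment n x f} \<subseteq> (\<lambda>f. makespan p n x f) ` ({..<n} \<rightarrow>\<^sub>E {..<x})"
  proof
    fix y assume "y \<in> {makespan p n x f | f. assignment n x f}"
    then obtain f where f: "assignment n x f" "y = makespan p n x f" by auto
    have "\<And>i. {j. j<n \<and> restrict f {..<n} j = i} = {j. j<n \<and> f j = i}" by auto
    then have "makespan p n x (restrict f {..<n}) = y" using f unfolding makespan_def load_def by simp
    moreover have "restrict f {..<n} \<in> {..<n} \<rightarrow>\<^sub>E {..<x}" using f unfolding assignment_def by auto
    ultimately show "y \<in> (\<lambda>f. makespan p n x f) ` ({..<n} \<rightarrow>\<^sub>E {..<x})" by blast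
  qed
  thus "finite {makespan p n x f | f. assignment n x f}"
    by (rule finite_subset) (simp add: finite_PiE)
  have "assignment n x (\<lambda>_. 0)" using assms unfolding assignment_def by auto
  thus "{makespan p n x f | f. assignment n x f} \<noteq> {}" by blast
qed

lemma opt_le: "x\<ge>1 \<Longrightarrow> assignment n x f \<Longrightarrow> opt p n x \<le> makespan p n x f"
  unfolding opt_def using opt_set[of x p n] by (intro Min_le) auto

lemma opt_obtain: "x\<ge>1 \<Longrightarrow> \<exists>f. assignment n x f \<and> opt p n x = makespan p n x f"
proof -
  assume "x\<ge>1"
  then have "opt p n x \<in> {makespan p n x f | f. assignment n x f}"
    unfolding opt_def using opt_set[of x p n] by (intro Min_in) auto
  thus ?thesis by auto
qed

lemma load_sum: "assignment n x f \<Longrightarrow> (\<Sum>i<x. load p n f i) = (\<Sum>j<n. p j)"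
proof -
  assume a: "assignment n x f"
  have "(\<Sum>i\<in>{..<x}. sum p {j \<in> {..<n}. f j = i}) = sum p {..<n}"
    by (rule sum.group) (use a in \<open>auto simp: assignment_def\<close>)
  moreover have "\<And>i. {j \<in> {..<n}. f j = i} = {j. j<n \<and> f j = i}" by auto
  ultimately show ?thesis unfolding load_def by simp
qed

lemma load_nn: "\<forall>j<n. p j \<ge> 0 \<Longrightarrow> load p n f i \<ge> 0"
  unfolding load_def by (auto intro: sum_nonneg)

lemma opt_avg: "x\<ge>1 \<Longrightarrow> (\<Sum>j<n. p j) / x \<le> opt p n x"
proof -
  assume x: "x\<ge>1"
  obtain f where f: "assignment n x f" "opt p n x = makespan p n x f" using opt_obtain[OF x] by blast
  have "(\<Sum>i<x. load p n f i) \<le> (\<Sum>i<x. makespan p n x f)" by (intro sum_mono) (auto intro: makespan_ge)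
  then have "(\<Sum>j<n. p j) \<le> x * opt p n x" using load_sum[OF f(1)] f(2) by simp
  thus ?thesis using x by (simp add: field_simps)
qed

lemma opt_nn: "\<forall>j<n. p j \<ge> 0 \<Longrightarrow> x\<ge>1 \<Longrightarrow> 0 \<le> opt p n x"
proof -
  assume nn: "\<forall>j<n. p j \<ge> 0" and x: "x\<ge>1"
  obtain f where f: "assignment n x f" "opt p n x = makespan p n x f" using opt_obtain[OF x] by blast
  have "load p n f 0 \<le> makespan p n x f" using x by (intro makespan_ge) auto
  thus ?thesis using load_nn[OF nn, of f 0] f by simp
qed

lemma opt_mono:
  assumes nn: "\<forall>j<n. p j \<ge> 0" and m0: "1 \<le> m0" "m0 \<le> m"
  shows "opt p n m \<le> opt p n m0"
proof -
  obtain f where f: "assignment n m0 f" "opt p n m0 = makespan p n m0 f" using opt_obtain[OF m0(1)] by blast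
  have fm: "assignment n m f" using f(1) m0 unfolding assignment_def by auto
  obtain i where i: "i<m" "makespan p n m f = load p n f i" using makespan_in[of m p n f] m0 by auto
  have "load p n f i \<le> makespan p n m0 f"
  proof (cases "i < m0")
    case True thus ?thesis by (rule makespan_ge)
  next
    case False
    then have e: "{j. j<n \<and> f j = i} = {}" using f(1) unfolding assignment_def by auto
    then have "load p n f i = 0" unfolding load_def by (metis sum.empty)
    moreover have "load p n f 0 \<le> makespan p n m0 f" using m0 by (intro makespan_ge) auto
    ultimately show ?thesis using load_nn[OF nn, of f 0] by simp
  qed
  thus ?thesis using opt_le[OF _ fm, of p] m0 i f(2) by simp
qed

theorem lemma16:
  fixes p :: "nat \<Rightarrow> real" and n m :: nat and B Bstar :: "nat \<Rightarrow> nat" and \<theta> :: real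
  assumes "\<forall>j<n. p j \<ge> 0"
    and "m \<ge> 1"
    and "assignment n m B"
    and "assignment n m Bstar"
    and "makespan p n m Bstar = opt p n m"
    and "makespan p n m B / makespan p n m Bstar \<le> \<theta>"
  shows "robust p n m B (max \<theta> 2)"
  unfolding robust_def
proof
  fix m0 assume "m0 \<in> {1..m}"
  then have m0: "1 \<le> m0" "m0 \<le> m" by auto
  define S where "S = makespan p n m B"
  define P where "P = (\<Sum>j<n. p j)"
  define Ms where "Ms = makespan p n m Bstar"
  have snn: "\<forall>k<m. load p n B k \<ge> 0" using load_nn assms(1) by blast
  have sS: "\<forall>k<m. load p n B k \<le> S" unfolding S_def using makespan_ge by blast
  obtain g where g: "\<forall>k<m. g k < m0"
    "\<forall>i<m0. BL (load p n B) m g i \<le> max S (2 * (\<Sum>k<m. load p n B k) / m0)"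
    using bag_sched[OF snn sS m0(1)] by blast
  have PB: "(\<Sum>k<m. load p n B k) = P" using load_sum[OF assms(3)] P_def by simp
  have onn: "0 \<le> opt p n m0" using opt_nn assms(1) m0 by blast
  have b1: "2 * P / m0 \<le> max \<theta> 2 * opt p n m0"
  proof -
    have "2 * P / m0 \<le> 2 * opt p n m0" using opt_avg[OF m0(1), where p=p and n=n] P_def by simp
    also have "\<dots> \<le> max \<theta> 2 * opt p n m0" using onn by (intro mult_right_mono) auto
    finally show ?thesis .
  qed
  have Snn: "0 \<le> S" using snn sS assms(2) by force
  have Msnn: "0 \<le> Ms" unfolding Ms_def using makespan_ge[of 0 m p n Bstar] load_nn[OF assms(1), of Bstar 0] assms(2) by simp
  have b2: "S \<le> max \<theta> 2 * opt p n m0"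
  proof (cases "Ms = 0")
    case True
    obtain i where i: "i<m" "S = load p n B i" using makespan_in assms(2) S_def by blast
    have "load p n B i \<le> (\<Sum>k<m. load p n B k)" using i snn by (intro member_le_sum) auto
    also have "\<dots> = (\<Sum>k<m. load p n Bstar k)" using PB load_sum[OF assms(4)] P_def by simp
    also have "\<dots> \<le> (\<Sum>k<m. Ms)" unfolding Ms_def by (intro sum_mono) (auto intro: makespan_ge)
    finally have "S \<le> 0" using True i by simp
    moreover have "0 \<le> max \<theta> 2 * opt p n m0" using onn by simp
    ultimately show ?thesis by linarith
  next
    case False
    then have Mp: "Ms > 0" using Msnn by simp
    have "S / Ms \<le> \<theta>" using assms(6) S_def Ms_def by simp
    then have St: "S \<le> \<theta> * Ms" using Mp by (simp add: divide_le_eq)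
    have tnn: "0 \<le> \<theta>" using \<open>S / Ms \<le> \<theta>\<close> Snn Msnn by (meson divide_nonneg_nonneg order_trans)
    have "Ms \<le> opt p n m0" using opt_mono[OF assms(1) m0] assms(5) Ms_def by simp
    then have "\<theta> * Ms \<le> \<theta> * opt p n m0" using tnn by (intro mult_left_mono) auto
    also have "\<dots> \<le> max \<theta> 2 * opt p n m0" using onn by (intro mult_right_mono) auto
    finally show ?thesis using St by linarith
  qed
  show "\<exists>g. assignment m m0 g \<and>
        (\<forall>i<m0. (\<Sum>k\<in>{k. k < m \<and> g k = i}. load p n B k) \<le> max \<theta> 2 * opt p n m0)"
  proof (intro exI conjI allI impI)
    show "assignment m m0 g" using g(1) unfolding assignment_def by auto
    fix i assume "i < m0"
    then have "BL (load p n B) m g i \<le> max S (2 * P / m0)" using g(2) PB by simp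
    then show "(\<Sum>k\<in>{k. k < m \<and> g k = i}. load p n B k) \<le> max \<theta> 2 * opt p n m0"
      unfolding BL_def using b1 b2 by linarith
  qed
qed

end
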